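(* Let $0<\beta<1$, $\bar{x}\in\mathcal{X}$, and $z=F_{\bar{x}}^{-1}(\beta)$. Suppose that $x\mapsto f(x,Y)$ is continuous at $\bar{x}$ with probability 1, that $F_{\bar{x}}$ is continuous at $z$, and that $F_{\bar{x}}$ is strictly increasing at $F_{\bar{x}}^{-1}(\beta)$ in the sense that for all $\epsilon>0$, $$F_{\bar{x}}\big(F_{\bar{x}}^{-1}(\beta)-\epsilon\big)<\beta<F_{\bar{x}}\big(F_{\bar{x}}^{-1}(\beta)+\epsilon\big).$$ Then $x\mapsto F_x^{-1}(\beta)$ is continuous at $\bar{x}$.
   Context: $Y$ is a random vector in $\mathbb{R}^d$, $\mathcal{X}\subset\mathbb{R}^k$, $f:\mathcal{X}\times\mathbb{R}^d\to\mathbb{R}$ with $f(x,Y)$ measurable for all $x$, $F_x(z)=\mathbb{P}(f(x,Y)\le z)$ and $F_x^{-1}(\beta)=\inf\{z\in\mathbb{R}: F_x(z)\ge\beta\}$. *)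

theory Defs
  imports "HOL-Probability.Probability"
begin

definition cdfF :: "'a measure \<Rightarrow> ('k \<Rightarrow> 'd \<Rightarrow> real) \<Rightarrow> ('a \<Rightarrow> 'd) \<Rightarrow> 'k \<Rightarrow> real \<Rightarrow> real" where
  "cdfF M f Y x z = measure M {\<omega> \<in> space M. f x (Y \<omega>) \<le> z}"

definition quantF :: "'a measure \<Rightarrow> ('k \<Rightarrow> 'd \<Rightarrow> real) \<Rightarrow> ('a \<Rightarrow> 'd) \<Rightarrow> 'k \<Rightarrow> real \<Rightarrow> real" where
  "quantF M f Y x \<beta> = Inf {z. cdfF M f Y x z \<ge> \<beta>}"

end

theory Submission
  imports Defs
begin

lemma conv_prob:
  assumes P: "prob_space M"
    and g: "\<And>n. g n \<in> borel_measurable M" and h: "h \<in> borel_measurable M"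
    and ae: "AE \<omega> in M. (\<lambda>n. g n \<omega>) \<longlonglongrightarrow> h \<omega>" and d: "(d::real) > 0"
  shows "(\<lambda>n. measure M {\<omega>\<in>space M. d < \<bar>g n \<omega> - h \<omega>\<bar>}) \<longlonglongrightarrow> 0"
proof -
  interpret prob_space M by fact
  define A where "A n = {\<omega>\<in>space M. d < \<bar>g n \<omega> - (h \<omega>::real)\<bar>}" for n
  have Am: "A n \<in> sets M" for n unfolding A_def using g h by measurable
  have "(\<lambda>n. integral\<^sup>L M (indicator (A n) :: 'a \<Rightarrow> real)) \<longlonglongrightarrow> integral\<^sup>L M (\<lambda>_. 0::real)"
  proof (rule integral_dominated_convergence[where w="\<lambda>_. 1"])
    show "AE x in M. (\<lambda>i. indicator (A i) x :: real) \<longlonglongrightarrow> 0"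
      using ae
    proof eventually_elim
      case (elim x)
      then have "\<forall>\<^sub>F n in sequentially. dist (g n x) (h x) < d" using d tendstoD by blast
      then have "\<forall>\<^sub>F n in sequentially. indicator (A n) x = (0::real)"
        by eventually_elim (auto simp: A_def dist_real_def indicator_def)
      then show ?case by (rule tendsto_eventually)
    qed
  qed (use Am in \<open>auto simp: indicator_def\<close>)
  then show ?thesis using Am by (simp add: A_def[symmetric])
qed

theorem mainTheorem13:
  fixes M :: "'a measure"
    and Y :: "'a \<Rightarrow> real ^ 'd"
    and f :: "real ^ 'k \<Rightarrow> real ^ 'd \<Rightarrow> real"
    and X :: "(real ^ 'k) set"
    and xbar :: "real ^ 'k"
    and \<beta> :: real
  assumes "prob_space M"
    and meas: "\<And>x. x \<in> X \<Longrightarrow> (\<lambda>\<omega>. f x (Y \<omega>)) \<in> borel_measurable M"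
    and "0 < \<beta>" and "\<beta> < 1"
    and "xbar \<in> X"
    and contAE: "AE \<omega> in M. continuous (at xbar within X) (\<lambda>x. f x (Y \<omega>))"
    and "isCont (cdfF M f Y xbar) (quantF M f Y xbar \<beta>)"
    and "\<And>\<epsilon>. \<epsilon> > 0 \<Longrightarrow>
           cdfF M f Y xbar (quantF M f Y xbar \<beta> - \<epsilon>) < \<beta> \<and>
           \<beta> < cdfF M f Y xbar (quantF M f Y xbar \<beta> + \<epsilon>)"
  shows "continuous (at xbar within X) (\<lambda>x. quantF M f Y x \<beta>)"
proof -
  interpret prob_space M by fact
  note gap = assms(8)
  define q where "q = quantF M f Y xbar \<beta>"
  show ?thesis unfolding continuous_within_sequentially
  proof (intro allI impI)
    fix xs assume xs: "(\<forall>n. xs n \<in> X) \<and> xs \<longlonglongrightarrow> xbar"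
    have xsX: "xs n \<in> X" for n using xs by auto
    have gm[measurable]: "(\<lambda>\<omega>. f (xs n) (Y \<omega>)) \<in> borel_measurable M" for n using meas xsX by auto
    have hm[measurable]: "(\<lambda>\<omega>. f xbar (Y \<omega>)) \<in> borel_measurable M" using meas assms(5) by auto
    have ae: "AE \<omega> in M. (\<lambda>n. f (xs n) (Y \<omega>)) \<longlonglongrightarrow> f xbar (Y \<omega>)"
      using contAE
    proof eventually_elim
      case (elim \<omega>)
      then show ?case using xs unfolding continuous_within_sequentially by (auto simp: o_def)
    qed
    show "((\<lambda>x. quantF M f Y x \<beta>) \<circ> xs) \<longlonglongrightarrow> quantF M f Y xbar \<beta>"
    proof (rule LIMSEQ_I)
      fix r :: real assume r: "0 < r"
      define e where "e = r / 2"
      define d where "d = e / 2"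
      have e: "e > 0" "d > 0" "e = d + d" using r by (auto simp: e_def d_def)
      define P where "P n = measure M {\<omega>\<in>space M. d < \<bar>f (xs n) (Y \<omega>) - f xbar (Y \<omega>)\<bar>}" for n
      have Plim: "P \<longlonglongrightarrow> 0" unfolding P_def
        by (rule conv_prob[OF assms(1) gm hm ae e(2)])
      define c where "c = min (\<beta> - cdfF M f Y xbar (q - d)) (cdfF M f Y xbar (q + d) - \<beta>)"
      have c: "c > 0" using gap[OF e(2)] by (auto simp: c_def q_def)
      obtain N where N: "\<And>n. n \<ge> N \<Longrightarrow> norm (P n - 0) < c" using LIMSEQ_D[OF Plim c] by blast
      show "\<exists>N. \<forall>n\<ge>N. norm (((\<lambda>x. quantF M f Y x \<beta>) \<circ> xs) n - quantF M f Y xbar \<beta>) < r"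
      proof (intro exI allI impI)
        fix n assume n: "n \<ge> N"
        have Pn: "P n < c" using N[OF n] by simp
        define D where "D = {\<omega>\<in>space M. d < \<bar>f (xs n) (Y \<omega>) - f xbar (Y \<omega>)\<bar>}"
        have Dm: "D \<in> sets M" unfolding D_def by measurable
        have up: "cdfF M f Y (xs n) (q + e) > \<beta>"
        proof -
          have "{\<omega>\<in>space M. f xbar (Y \<omega>) \<le> q + d} \<subseteq> {\<omega>\<in>space M. f (xs n) (Y \<omega>) \<le> q + e} \<union> D"
            using e by (auto simp: D_def)
          then have "cdfF M f Y xbar (q + d) \<le> measure M ({\<omega>\<in>space M. f (xs n) (Y \<omega>) \<le> q + e} \<union> D)"
            unfolding cdfF_def using Dm by (intro finite_measure_mono) auto
          also have "\<dots> \<le> cdfF M f Y (xs n) (q + e) + P n"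
            unfolding cdfF_def P_def D_def[symmetric] using Dm by (intro measure_Un_le) auto
          finally show ?thesis using Pn by (auto simp: c_def)
        qed
        have lo: "cdfF M f Y (xs n) (q - e) < \<beta>"
        proof -
          have "{\<omega>\<in>space M. f (xs n) (Y \<omega>) \<le> q - e} \<subseteq> {\<omega>\<in>space M. f xbar (Y \<omega>) \<le> q - d} \<union> D"
            using e by (auto simp: D_def)
          then have "cdfF M f Y (xs n) (q - e) \<le> measure M ({\<omega>\<in>space M. f xbar (Y \<omega>) \<le> q - d} \<union> D)"
            unfolding cdfF_def using Dm by (intro finite_measure_mono) auto
          also have "\<dots> \<le> cdfF M f Y xbar (q - d) + P n"
            unfolding cdfF_def P_def D_def[symmetric] using Dm by (intro measure_Un_le) auto
          finally show ?thesis using Pn by (auto simp: c_def)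
        qed
        define S where "S = {z. cdfF M f Y (xs n) z \<ge> \<beta>}"
        have mono: "cdfF M f Y (xs n) a \<le> cdfF M f Y (xs n) b" if "a \<le> b" for a b
          unfolding cdfF_def using that by (intro finite_measure_mono) auto
        have Slow: "z > q - e" if "z \<in> S" for z
        proof (rule ccontr)
          assume "\<not> z > q - e"
          then have "cdfF M f Y (xs n) z \<le> cdfF M f Y (xs n) (q - e)" by (intro mono) auto
          with lo that show False by (auto simp: S_def)
        qed
        have qeS: "q + e \<in> S" using up by (auto simp: S_def)
        have "Inf S \<le> q + e" using qeS Slow by (intro cInf_lower) (auto simp: bdd_below_def intro!: exI[of _ "q - e"] less_imp_le)
        moreover have "Inf S \<ge> q - e" using qeS Slow by (intro cInf_greatest) (auto intro: less_imp_le)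
        ultimately have "\<bar>Inf S - q\<bar> \<le> e" by auto
        then show "norm (((\<lambda>x. quantF M f Y x \<beta>) \<circ> xs) n - quantF M f Y xbar \<beta>) < r"
          using e r unfolding q_def quantF_def S_def by (simp add: e_def)
      qed
    qed
  qed
qed

end
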